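(* Consider the repeated service game described in the context, with $t>0$, $\tau\in(0,t)$, $c>0$, $p>c$, $d\in(0,1)$, $w\in(0,1)$, and a strictly decreasing continuous utility $\Gamma:[0,1]\to(0,\infty)$ with $\Gamma(0)>p$. If the cooperation conditions hold, then $$d<\min\left\{1-\frac{c}{p},\ \Gamma^{-1}(p)\right\}\qquad\text{and}\qquad w>\max\left\{\frac{1-\tau/t}{p/c-\tau/t},\ 1-\frac{1-p/\Gamma(0)}{\tau/t}\right\}.$$
   Context: A service provider (SP) and a client interact in rounds of duration $t>0$. The parameters are: trial time $\tau$, SP cost per unit time $c$, price per unit time $p$, channel outage probability $d$, continuation probability (cooperation willingness) $w$, and a client utility function $\Gamma$. When both players use COOP, the long-term payoffs are $$\Pi_s^{\mathrm C}=\frac{(1-d)(p-c)t-dc\tau}{1-(1-d)w},\qquad \Pi_c^{\mathrm C}=\frac{(1-d)(\Gamma(d)-p)t+d\Gamma(d)\tau}{1-(1-d)w}.$$ For an integer $j\ge 2$, the long-term payoff of a player using the defect-and-recover-after-$j$-rounds strategy JDEF$_j$ against COOP is: - for the SP, $$\Pi_s^{(j)}=\frac{(1-d)\big(pt-c\tau-w^{j-1}c(t-\tau)\big)-dc\tau}{1-(1-d)w^{j}};$$ - for the client, $$\Pi_c^{(j)}=\frac{(1-d)\big(\Gamma(d)\tau+w^{j-1}(\Gamma(d)(t-\tau)-pt)\big)+d\Gamma(d)\tau}{1-(1-d)w^{j}}.$$ The cooperation conditions hold when both of the following hold: - $\Pi_s^{\mathrm C}\ge\Pi_s^{(j)}$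 for all integers $j\ge2$; - $\Pi_c^{\mathrm C}\ge \Pi_c^{(j)}$ for all integers $j\ge 2$. For $0<y\le\Gamma(0)$, we write $\Gamma^{-1}(y):=\sup\{x\in[0,1]:\Gamma(x)\ge y\}$. This coincides with the inverse of $\Gamma$ whenever $y$ is in the range of $\Gamma$. *)

theory Defs
  imports Complex_Main
begin

definition Pi_s_C :: "real \<Rightarrow> real \<Rightarrow> real \<Rightarrow> real \<Rightarrow> real \<Rightarrow> real \<Rightarrow> real" where
  "Pi_s_C t \<tau> c p d w = ((1 - d) * (p - c) * t - d * c * \<tau>) / (1 - (1 - d) * w)"

definition Pi_c_C :: "real \<Rightarrow> real \<Rightarrow> real \<Rightarrow> real \<Rightarrow> real \<Rightarrow> (real \<Rightarrow> real) \<Rightarrow> real" where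
  "Pi_c_C t \<tau> p d w \<Gamma> = ((1 - d) * (\<Gamma> d - p) * t + d * \<Gamma> d * \<tau>) / (1 - (1 - d) * w)"

definition Pi_s_J :: "nat \<Rightarrow> real \<Rightarrow> real \<Rightarrow> real \<Rightarrow> real \<Rightarrow> real \<Rightarrow> real \<Rightarrow> real" where
  "Pi_s_J j t \<tau> c p d w =
     ((1 - d) * (p * t - c * \<tau> - w ^ (j - 1) * c * (t - \<tau>)) - d * c * \<tau>) / (1 - (1 - d) * w ^ j)"

definition Pi_c_J :: "nat \<Rightarrow> real \<Rightarrow> real \<Rightarrow> real \<Rightarrow> real \<Rightarrow> real \<Rightarrow> (real \<Rightarrow> real) \<Rightarrow> real" where
  "Pi_c_J j t \<tau> p d w \<Gamma> =
     ((1 - d) * (\<Gamma> d * \<tau> + w ^ (j - 1) * (\<Gamma> d * (t - \<tau>) - p * t)) + d * \<Gamma> d * \<tau>) / (1 - (1 - d) * w ^ j)"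

definition cooperation_conditions ::
  "real \<Rightarrow> real \<Rightarrow> real \<Rightarrow> real \<Rightarrow> real \<Rightarrow> real \<Rightarrow> (real \<Rightarrow> real) \<Rightarrow> bool" where
  "cooperation_conditions t \<tau> c p d w \<Gamma> \<longleftrightarrow>
     (\<forall>j::nat. j \<ge> 2 \<longrightarrow> Pi_s_C t \<tau> c p d w \<ge> Pi_s_J j t \<tau> c p d w) \<and>
     (\<forall>j::nat. j \<ge> 2 \<longrightarrow> Pi_c_C t \<tau> p d w \<Gamma> \<ge> Pi_c_J j t \<tau> p d w \<Gamma>)"

definition gen_inv :: "(real \<Rightarrow> real) \<Rightarrow> real \<Rightarrow> real" where
  "gen_inv \<Gamma> y = Sup {x \<in> {0..1}. \<Gamma> x \<ge> y}"

end

theory Submission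
  imports Defs "HOL-Analysis.Analysis"
begin

lemma frac_ge: "(x::real) > 0 \<Longrightarrow> y > 0 \<Longrightarrow> b / y \<le> a / x \<Longrightarrow> b * x \<le> a * y"
  by (simp add: divide_simps)

theorem corollary3:
  fixes t \<tau> c p d w :: real and \<Gamma> :: "real \<Rightarrow> real"
  assumes "t > 0" and "0 < \<tau>" and "\<tau> < t" and "c > 0" and "p > c"
    and "0 < d" and "d < 1" and "0 < w" and "w < 1"
    and "strict_antimono_on {0..1} \<Gamma>"
    and "continuous_on {0..1} \<Gamma>"
    and "\<forall>x\<in>{0..1}. \<Gamma> x > 0"
    and "\<Gamma> 0 > p"
    and "cooperation_conditions t \<tau> c p d w \<Gamma>"
  shows "d < min (1 - c / p) (gen_inv \<Gamma> p) \<and>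
         w > max ((1 - \<tau> / t) / (p / c - \<tau> / t)) (1 - (1 - p / \<Gamma> 0) / (\<tau> / t))"
proof -
  note a = assms
  define D where "D = 1 - d"
  define G where "G = \<Gamma> d"
  have D: "D > 0" "D < 1" using a unfolding D_def by auto
  have x1: "1 - D * w > 0" using D a by (smt (verit) mult_less_cancel_left2)
  have w2: "w^2 < 1" using a by (simp add: power_less_one_iff)
  have x2: "1 - D * w^2 > 0" using D w2 by (smt (verit) mult_less_cancel_left2)
  have s: "Pi_s_C t \<tau> c p d w \<ge> Pi_s_J 2 t \<tau> c p d w"
   and cc: "Pi_c_C t \<tau> p d w \<Gamma> \<ge> Pi_c_J 2 t \<tau> p d w \<Gamma>"
    using a(14) unfolding cooperation_conditions_def by auto
  have s1: "((1 - d) * (p * t - c * \<tau> - w ^ (2 - 1) * c * (t - \<tau>)) - d * c * \<tau>) * (1 - D * w)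
      \<le> ((1 - d) * (p - c) * t - d * c * \<tau>) * (1 - D * w^2)"
    using frac_ge[OF x1 x2] s unfolding Pi_s_C_def Pi_s_J_def D_def by simp
  have "((1 - d) * (p - c) * t - d * c * \<tau>) * (1 - D * w^2) - 
        ((1 - d) * (p * t - c * \<tau> - w ^ (2 - 1) * c * (t - \<tau>)) - d * c * \<tau>) * (1 - D * w)
      = ((1 - w) * D) * (w * (D*p*t - c*\<tau>) - c*(t-\<tau>))"
    unfolding D_def by (simp add: power2_eq_square algebra_simps)
  with s1 have "((1 - w) * D) * (w * (D*p*t - c*\<tau>) - c*(t-\<tau>)) \<ge> 0" by linarith
  moreover have "(1 - w) * D > 0" using D a by simp
  ultimately have S: "w * (D*p*t - c*\<tau>) \<ge> c*(t-\<tau>)"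
    by (simp add: zero_le_mult_iff)
  have c1: "((1 - d) * (G * \<tau> + w ^ (2 - 1) * (G * (t - \<tau>) - p * t)) + d * G * \<tau>) * (1 - D * w)
      \<le> ((1 - d) * (G - p) * t + d * G * \<tau>) * (1 - D * w^2)"
    using frac_ge[OF x1 x2] cc unfolding Pi_c_C_def Pi_c_J_def D_def G_def by simp
  have "((1 - d) * (G - p) * t + d * G * \<tau>) * (1 - D * w^2) -
       ((1 - d) * (G * \<tau> + w ^ (2 - 1) * (G * (t - \<tau>) - p * t)) + d * G * \<tau>) * (1 - D * w)
      = ((1 - w) * D) * (G*\<tau>*w + G*(t-\<tau>) - p*t)"
    unfolding D_def by (simp add: power2_eq_square algebra_simps)
  with c1 have "((1 - w) * D) * (G*\<tau>*w + G*(t-\<tau>) - p*t) \<ge> 0" by linarith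
  moreover have "(1 - w) * D > 0" using D a by simp
  ultimately have C: "G*\<tau>*w + G*(t-\<tau>) - p*t \<ge> 0"
    by (simp add: zero_le_mult_iff)
  have Gpos: "G > 0" using a unfolding G_def by auto
  have "G*\<tau>*w < G*\<tau>" using Gpos a by simp
  with C have "G * t > p * t" by (simp add: algebra_simps)
  hence Gp: "G > p" using a by simp
  have G0: "G < \<Gamma> 0" using a(10) a(6) a(7) unfolding G_def monotone_on_def by auto
  have B: "D*p*t - c*\<tau> > c*(t-\<tau>)"
  proof -
    have "c*(t-\<tau>) > 0" using a by simp
    with S have pos: "D*p*t - c*\<tau> > 0" using a
      by (smt (verit) mult_nonneg_nonpos)
    have "w * (D*p*t - c*\<tau>) < D*p*t - c*\<tau>" using pos a by simp
    with S show ?thesis by linarith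
  qed
  hence "D*p*t > c*t" by (simp add: algebra_simps)
  hence "D*p > c" using a by simp
  hence d1: "d < 1 - c/p" using a unfolding D_def by (simp add: field_simps)
  have d2: "d < gen_inv \<Gamma> p"
  proof -
    have dd: "d \<in> {0..1}" using a by simp
    have "G - p > 0" using Gp by simp
    then obtain e where e: "e > 0" and he: "\<And>x. x \<in> {0..1} \<Longrightarrow> dist x d < e \<Longrightarrow> dist (\<Gamma> x) (\<Gamma> d) < G - p"
      using a(11) dd unfolding continuous_on_iff by blast
    define x where "x = min (d + e/2) 1"
    have xin: "x \<in> {0..1}" using a e unfolding x_def by auto
    have "dist x d < e" using a e unfolding x_def dist_real_def by auto
    hence "dist (\<Gamma> x) (\<Gamma> d) < G - p" using he xin by blast
    hence "\<Gamma> x \<ge> p" unfolding dist_real_def G_def by linarith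
    hence xs: "x \<in> {x \<in> {0..1}. \<Gamma> x \<ge> p}" using xin by simp
    have "bdd_above {x \<in> {0..1}. \<Gamma> x \<ge> p}" by (rule bdd_aboveI[of _ 1]) auto
    hence "x \<le> gen_inv \<Gamma> p" unfolding gen_inv_def using xs by (simp add: cSup_upper)
    moreover have "d < x" using a e unfolding x_def by auto
    ultimately show ?thesis by simp
  qed
  have w1: "w > (1 - \<tau> / t) / (p / c - \<tau> / t)"
  proof -
    have eq: "(1 - \<tau> / t) / (p / c - \<tau> / t) = c*(t-\<tau>) / (p*t - c*\<tau>)"
    proof -
      have "p*t > c*\<tau>" using a by (smt (verit) mult_strict_mono)
      thus ?thesis using a by (simp add: field_simps)
    qed
    have pp: "D*p*t - c*\<tau> > 0" using B a by (smt (verit) mult_pos_pos)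
    have Dpt: "D*p*t < p*t" using a D by simp
    have ptc: "p*t - c*\<tau> > 0" using a by (smt (verit) mult_strict_mono)
    have "c*(t-\<tau>) / (p*t - c*\<tau>) < c*(t-\<tau>) / (D*p*t - c*\<tau>)"
    proof (rule divide_strict_left_mono)
      show "D*p*t - c*\<tau> < p*t - c*\<tau>" using Dpt by simp
      show "0 < c*(t-\<tau>)" using a by simp
      show "0 < (p*t - c*\<tau>)*(D*p*t - c*\<tau>)" by (rule mult_pos_pos[OF ptc pp])
    qed
    also have "\<dots> \<le> w" using S pp by (simp add: divide_simps)
    finally show ?thesis using eq by simp
  qed
  have w2: "w > 1 - (1 - p / \<Gamma> 0) / (\<tau> / t)"
  proof -
    have eq: "1 - (1 - p / \<Gamma> 0) / (\<tau> / t) = 1 - t * (1 - p / \<Gamma> 0) / \<tau>"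
      using a by (simp add: field_simps)
    have "p / \<Gamma> 0 < p / G" using Gpos G0 a by (intro divide_strict_left_mono) auto
    hence "t * (1 - p / G) < t * (1 - p / \<Gamma> 0)" using a by simp
    hence lt: "1 - t * (1 - p / \<Gamma> 0) / \<tau> < 1 - t * (1 - p / G) / \<tau>"
      using a by (simp add: divide_strict_right_mono)
    have "1 - t * (1 - p / G) / \<tau> = (G*(\<tau> - t) + p*t) / (G*\<tau>)"
      using Gpos a by (simp add: field_simps)
    also have "\<dots> \<le> w" using C Gpos a by (simp add: divide_simps algebra_simps)
    finally show ?thesis using lt eq by linarith
  qed
  show ?thesis using d1 d2 w1 w2 by simp
qed

end
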